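(* With $H$, $f$, $V$ (basis $v^{(1)},\dots,v^{(m)}$, coaction $\rho(v^{(i)})=\sum_{j=1}^m v^{(j)}\otimes\sum_{g\in G_f}a_{ji}^gp_g$) and the induced comodule $\tilde V$ as in the context, with $V$ simple, the irreducible character of $\tilde V$ is $$\chi(\tilde V)=\sum_{i=1}^m\sum_{z\in T_f}\sum_{g\in G_f}\tau(z^{-1},g;f)^{-1}\tau(z^{-1}gz,z^{-1};f)\,a_{ii}^g\,p_{z^{-1}gz}\#(z^{-1}\triangleright f).$$
   Context: Standing setup: $\Bbbk$ is an algebraically closed field of characteristic $0$, $F$ a group (possibly infinite), $G$ a finite group, and $(F,G,\triangleleft,\triangleright)$ a matched pair: $\triangleright:G\times F\to F$ a left action of $G$ on the set $F$, $\triangleleft:G\times F\to G$ a right action of $F$ on the set $G$, with $g\triangleright(ff')=(g\triangleright f)((g\triangleleft f)\triangleright f')$ and $(gg')\triangleleft f=(g\triangleleft(g'\triangleright f))(g'\triangleleft f)$. Maps $\sigma:G\times F\times F\to\Bbbk^\times$ and $\tau:G\times G\times F\to\Bbbk^\times$ satisfy: $\sigma(g;1_F,f)=\sigma(g;f,1_F)=\sigma(1_G;f,f')=1$; $\sigma(g\triangleleft f;f',f'')\sigma(g;f,f'f'')=\sigma(g;f,f')\sigma(g;ff',f'')$; $\tau(1_G,g;f)=\tau(g,1_G;f)=\tau(g,g';1_F)=1$; $\tau(g,g';g''\triangleright f)\tau(gg',g'';f)=\tau(g,g'g'';f)\tau(g',g'';f)$; and $\sigma(gg';f,f')\tau(g,g';ff')=\sigma(g;g'\triangleright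 f,(g'\triangleleft f)\triangleright f')\sigma(g';f,f')\tau(g,g';f)\tau(g\triangleleft(g'\triangleright f),g'\triangleleft f;f')$. $H=\Bbbk^G{}^\tau\#_\sigma\Bbbk F$ has basis $\{p_g\#f\}$, product $(p_g\#f)(p_{g'}\#f')=\delta_{g\triangleleft f,g'}\sigma(g;f,f')p_g\#ff'$, coproduct $\Delta(p_g\#f)=\sum_{x\in G}\tau(gx^{-1},x;f)\,p_{gx^{-1}}\#(x\triangleright f)\otimes p_x\#f$, counit $\varepsilon(p_g\#f)=\delta_{g,1_G}$. Fix $f\in F$; $G_f=\{g\in G\mid g\triangleright f=f\}$; $T_f$ a complete set of right coset representatives of $G_f$ in $G$ containing $1_G$. $\Bbbk^{G_f}_{\tau_f}$ is the coalgebra with basis $\{p_g\}_{g\in G_f}$, $\Delta(p_g)=\sum_{x\in G_f}\tau(gx^{-1},x;f)p_{gx^{-1}}\otimes p_x$, $\varepsilon(p_g)=\delta_{g,1_G}$. $H'_f$ is the coalgebra with basis $\{p_g\#f'\mid g\in G_f,f'\in F\}$, $\Delta(p_g\#f')=\sum_{x\in G_f}\tau(gx^{-1},x;f')p_{gx^{-1}}\#(x\triangleright f')\otimes p_x\#f'$; $H$ is a left $H'_f$-comodule via $(\pi_f\otimes\mathrm{id})\Delta$ ($\pi_f$ kills $p_g\#f'$, $g\notin G_f$). For a right $\Bbbk^{G_f}_{\tau_f}$-comodule $V$ with $\rho(v)=\sum_{g\in G_f}v_g\otimes p_g$, $V\otimes\Bbbk f$ is a right $H'_f$-comodule via $v\otimes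 f\mapsto\sum_g v_g\otimes f\otimes p_g\#f$, and the induced comodule $\tilde V=(V\otimes\Bbbk f)\Box_{H'_f}H$ (cotensor product) is a right $H$-comodule via $\mathrm{id}\otimes\Delta$. The character of a finite-dimensional right comodule $(M,\rho)$ with basis $m_1,\dots,m_n$ and dual basis $m_i^*$ is $\chi(M)=\sum_i(m_i^*\otimes\mathrm{id})\rho(m_i)\in H$. *)

theory Defs
  imports "HOL-Algebra.Group" "HOL-Algebra.Coset" "HOL-Library.Function_Algebras"
    "HOL-Computational_Algebra.Polynomial"
begin

definition alg_closed :: "'k::field itself \<Rightarrow> bool" where
  "alg_closed _ \<longleftrightarrow> (\<forall>p :: 'k poly. degree p \<ge> 1 \<longrightarrow> (\<exists>x. poly p x = 0))"

text \<open>A vector space with basis indexed by a set I is modelled as the set of finitely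
  supported functions I -> k (coefficients w.r.t. the basis).  Tensor products of such spaces
  have the product basis.\<close>

definition fsupp :: "('i \<Rightarrow> 'k::zero) \<Rightarrow> 'i set" where
  "fsupp x = {i. x i \<noteq> 0}"

definition vecs :: "'i set \<Rightarrow> ('i \<Rightarrow> 'k::zero) set" where
  "vecs I = {x. finite (fsupp x) \<and> fsupp x \<subseteq> I}"

definition fscale :: "'k::times \<Rightarrow> ('i \<Rightarrow> 'k) \<Rightarrow> ('i \<Rightarrow> 'k)" where
  "fscale c x = (\<lambda>i. c * x i)"

text \<open>Linear extension of a map given on basis vectors: T i is the image of the i-th basis vector.\<close>
definition lin :: "('i \<Rightarrow> 'j \<Rightarrow> 'k::comm_semiring_1) \<Rightarrow> ('i \<Rightarrow> 'k) \<Rightarrow> ('j \<Rightarrow> 'k)" where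
  "lin T x = (\<lambda>j. \<Sum>i\<in>fsupp x. x i * T i j)"

text \<open>T \<otimes> id and id \<otimes> T on basis vectors.\<close>
definition tens_id_r :: "('i \<Rightarrow> 'j \<Rightarrow> 'k::zero) \<Rightarrow> ('i \<times> 'c \<Rightarrow> 'j \<times> 'c \<Rightarrow> 'k)" where
  "tens_id_r T = (\<lambda>(i, c) (j, c'). if c' = c then T i j else 0)"

definition tens_id_l :: "('c \<Rightarrow> 'd \<Rightarrow> 'k::zero) \<Rightarrow> ('i \<times> 'c \<Rightarrow> 'i \<times> 'd \<Rightarrow> 'k)" where
  "tens_id_l T = (\<lambda>(i, c) (j, d). if j = i then T c d else 0)"

definition reassoc :: "(('a \<times> 'b) \<times> 'c \<Rightarrow> 'k) \<Rightarrow> ('a \<times> ('b \<times> 'c) \<Rightarrow> 'k)" where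
  "reassoc x = (\<lambda>(a, b, c). x ((a, b), c))"

text \<open>A coalgebra C with basis indexed by Cb: comultiplication \<Delta> (\<Delta> c is an element of
  C \<otimes> C) and counit \<epsilon>.  A right C-comodule V with basis indexed by I and coaction \<rho>
  (\<rho> i is an element of V \<otimes> C).\<close>
definition right_comodule ::
  "'c set \<Rightarrow> ('c \<Rightarrow> 'c \<times> 'c \<Rightarrow> 'k::comm_semiring_1) \<Rightarrow> ('c \<Rightarrow> 'k)
    \<Rightarrow> 'i set \<Rightarrow> ('i \<Rightarrow> 'i \<times> 'c \<Rightarrow> 'k) \<Rightarrow> bool" where
  "right_comodule Cb \<Delta> \<epsilon> I \<rho> \<longleftrightarrow>
     (\<forall>i\<in>I. \<rho> i \<in> vecs (I \<times> Cb)) \<and>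
     (\<forall>i\<in>I. reassoc (lin (tens_id_r \<rho>) (\<rho> i)) = lin (tens_id_l \<Delta>) (\<rho> i)) \<and>
     (\<forall>i\<in>I. lin (\<lambda>(j, c) j'. if j' = j then \<epsilon> c else 0) (\<rho> i) = (\<lambda>j. if j = i then 1 else 0))"

text \<open>Subcomodule: a subspace W of V with \<rho>(W) \<subseteq> W \<otimes> C, i.e. every C-component of
  \<rho>(w) lies in W.\<close>
definition subcomodule ::
  "'c set \<Rightarrow> 'i set \<Rightarrow> ('i \<Rightarrow> 'i \<times> 'c \<Rightarrow> 'k::field) \<Rightarrow> ('i \<Rightarrow> 'k) set \<Rightarrow> bool" where
  "subcomodule Cb I \<rho> W \<longleftrightarrow>
     W \<subseteq> vecs I \<and> module.subspace fscale W \<and>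
     (\<forall>w\<in>W. \<forall>c\<in>Cb. (\<lambda>j. lin \<rho> w (j, c)) \<in> W)"

definition simple_comodule ::
  "'c set \<Rightarrow> 'i set \<Rightarrow> ('i \<Rightarrow> 'i \<times> 'c \<Rightarrow> 'k::field) \<Rightarrow> bool" where
  "simple_comodule Cb I \<rho> \<longleftrightarrow>
     I \<noteq> {} \<and> (\<forall>W. subcomodule Cb I \<rho> W \<longrightarrow> W = {0} \<or> W = vecs I)"

text \<open>Finite-dimensional comodule given as a subspace M of a coordinate space, with coaction
  described by its components: \<phi> c m is the C-component at basis element c of \<rho>(m), i.e.
  \<rho>(m) = \<Sum>_c \<phi> c m \<otimes> c.  A basis of M, and the character w.r.t. a basis B
  (\<chi> = \<Sum>_b (b^* \<otimes> id) \<rho>(b), coefficient at c).\<close>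
definition is_basis :: "('i \<Rightarrow> 'k::field) set \<Rightarrow> ('i \<Rightarrow> 'k) set \<Rightarrow> bool" where
  "is_basis M B \<longleftrightarrow> finite B \<and> \<not> module.dependent fscale B \<and> module.span fscale B = M"

definition char_wrt ::
  "('i \<Rightarrow> 'k::field) set \<Rightarrow> ('c \<Rightarrow> ('i \<Rightarrow> 'k) \<Rightarrow> ('i \<Rightarrow> 'k)) \<Rightarrow> ('c \<Rightarrow> 'k)" where
  "char_wrt B \<phi> = (\<lambda>c. \<Sum>b\<in>B. module.representation fscale B (\<phi> c b) b)"

definition matched_pair ::
  "('f, 'a) monoid_scheme \<Rightarrow> ('g, 'b) monoid_scheme \<Rightarrow> ('g \<Rightarrow> 'f \<Rightarrow> 'f) \<Rightarrow> ('g \<Rightarrow> 'f \<Rightarrow> 'g) \<Rightarrow> bool"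
  where
  "matched_pair F G lact ract \<longleftrightarrow>
     group F \<and> group G \<and>
     (\<forall>g\<in>carrier G. \<forall>x\<in>carrier F. lact g x \<in> carrier F \<and> ract g x \<in> carrier G) \<and>
     (\<forall>x\<in>carrier F. lact \<one>\<^bsub>G\<^esub> x = x) \<and>
     (\<forall>g\<in>carrier G. \<forall>g'\<in>carrier G. \<forall>x\<in>carrier F.
        lact (g \<otimes>\<^bsub>G\<^esub> g') x = lact g (lact g' x)) \<and>
     (\<forall>g\<in>carrier G. ract g \<one>\<^bsub>F\<^esub> = g) \<and>
     (\<forall>g\<in>carrier G. \<forall>x\<in>carrier F. \<forall>x'\<in>carrier F.
        ract g (x \<otimes>\<^bsub>F\<^esub> x') = ract (ract g x) x') \<and>
     (\<forall>g\<in>carrier G. \<forall>x\<in>carrier F. \<forall>x'\<in>carrier F.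
        lact g (x \<otimes>\<^bsub>F\<^esub> x') = lact g x \<otimes>\<^bsub>F\<^esub> lact (ract g x) x') \<and>
     (\<forall>g\<in>carrier G. \<forall>g'\<in>carrier G. \<forall>x\<in>carrier F.
        ract (g \<otimes>\<^bsub>G\<^esub> g') x = ract g (lact g' x) \<otimes>\<^bsub>G\<^esub> ract g' x)"

definition cocycle_pair ::
  "('f, 'a) monoid_scheme \<Rightarrow> ('g, 'b) monoid_scheme \<Rightarrow> ('g \<Rightarrow> 'f \<Rightarrow> 'f) \<Rightarrow> ('g \<Rightarrow> 'f \<Rightarrow> 'g)
    \<Rightarrow> ('g \<Rightarrow> 'f \<Rightarrow> 'f \<Rightarrow> 'k::field) \<Rightarrow> ('g \<Rightarrow> 'g \<Rightarrow> 'f \<Rightarrow> 'k) \<Rightarrow> bool" where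
  "cocycle_pair F G lact ract \<sigma> \<tau> \<longleftrightarrow>
     (\<forall>g\<in>carrier G. \<forall>x\<in>carrier F. \<forall>x'\<in>carrier F. \<sigma> g x x' \<noteq> 0) \<and>
     (\<forall>g\<in>carrier G. \<forall>g'\<in>carrier G. \<forall>x\<in>carrier F. \<tau> g g' x \<noteq> 0) \<and>
     (\<forall>g\<in>carrier G. \<forall>x\<in>carrier F.
        \<sigma> g \<one>\<^bsub>F\<^esub> x = 1 \<and> \<sigma> g x \<one>\<^bsub>F\<^esub> = 1) \<and>
     (\<forall>x\<in>carrier F. \<forall>x'\<in>carrier F. \<sigma> \<one>\<^bsub>G\<^esub> x x' = 1) \<and>
     (\<forall>g\<in>carrier G. \<forall>x\<in>carrier F. \<forall>x'\<in>carrier F. \<forall>x''\<in>carrier F.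
        \<sigma> (ract g x) x' x'' * \<sigma> g x (x' \<otimes>\<^bsub>F\<^esub> x'')
          = \<sigma> g x x' * \<sigma> g (x \<otimes>\<^bsub>F\<^esub> x') x'') \<and>
     (\<forall>g\<in>carrier G. \<forall>x\<in>carrier F.
        \<tau> \<one>\<^bsub>G\<^esub> g x = 1 \<and> \<tau> g \<one>\<^bsub>G\<^esub> x = 1) \<and>
     (\<forall>g\<in>carrier G. \<forall>g'\<in>carrier G. \<tau> g g' \<one>\<^bsub>F\<^esub> = 1) \<and>
     (\<forall>g\<in>carrier G. \<forall>g'\<in>carrier G. \<forall>g''\<in>carrier G. \<forall>x\<in>carrier F.
        \<tau> g g' (lact g'' x) * \<tau> (g \<otimes>\<^bsub>G\<^esub> g') g'' x
          = \<tau> g (g' \<otimes>\<^bsub>G\<^esub> g'') x * \<tau> g' g'' x) \<and>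
     (\<forall>g\<in>carrier G. \<forall>g'\<in>carrier G. \<forall>x\<in>carrier F. \<forall>x'\<in>carrier F.
        \<sigma> (g \<otimes>\<^bsub>G\<^esub> g') x x' * \<tau> g g' (x \<otimes>\<^bsub>F\<^esub> x')
          = \<sigma> g (lact g' x) (lact (ract g' x) x') * \<sigma> g' x x' * \<tau> g g' x
            * \<tau> (ract g (lact g' x)) (ract g' x) x')"

text \<open>Comultiplication of H = k^G{}^\<tau>#_\<sigma> kF on the basis p_g#x (indexed by (g,x)):
  \<Delta>(p_g#x) = \<Sum>_{y\<in>G} \<tau>(g y^{-1}, y; x) p_{g y^{-1}}#(y \<triangleright> x) \<otimes> p_y#x.\<close>
definition H_comult ::
  "('g, 'b) monoid_scheme \<Rightarrow> ('g \<Rightarrow> 'f \<Rightarrow> 'f) \<Rightarrow> ('g \<Rightarrow> 'g \<Rightarrow> 'f \<Rightarrow> 'k::zero)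
    \<Rightarrow> 'g \<times> 'f \<Rightarrow> ('g \<times> 'f) \<times> ('g \<times> 'f) \<Rightarrow> 'k" where
  "H_comult G lact \<tau> = (\<lambda>(g, x) ((h1, x1), (h2, x2)).
     if h2 \<in> carrier G \<and> h1 = g \<otimes>\<^bsub>G\<^esub> inv\<^bsub>G\<^esub> h2 \<and> x1 = lact h2 x \<and> x2 = x
     then \<tau> (g \<otimes>\<^bsub>G\<^esub> inv\<^bsub>G\<^esub> h2) h2 x else 0)"

definition stab :: "('g, 'b) monoid_scheme \<Rightarrow> ('g \<Rightarrow> 'f \<Rightarrow> 'f) \<Rightarrow> 'f \<Rightarrow> 'g set" where
  "stab G lact x = {g \<in> carrier G. lact g x = x}"

definition kGf_comult ::
  "('g, 'b) monoid_scheme \<Rightarrow> ('g \<Rightarrow> 'f \<Rightarrow> 'f) \<Rightarrow> ('g \<Rightarrow> 'g \<Rightarrow> 'f \<Rightarrow> 'k::zero) \<Rightarrow> 'f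
    \<Rightarrow> 'g \<Rightarrow> 'g \<times> 'g \<Rightarrow> 'k" where
  "kGf_comult G lact \<tau> f = (\<lambda>g (h, y).
     if y \<in> stab G lact f \<and> h = g \<otimes>\<^bsub>G\<^esub> inv\<^bsub>G\<^esub> y then \<tau> (g \<otimes>\<^bsub>G\<^esub> inv\<^bsub>G\<^esub> y) y f else 0)"

definition kGf_counit :: "('g, 'b) monoid_scheme \<Rightarrow> 'g \<Rightarrow> 'k::{zero,one}" where
  "kGf_counit G = (\<lambda>g. if g = \<one>\<^bsub>G\<^esub> then 1 else 0)"

definition V_coaction ::
  "('g, 'b) monoid_scheme \<Rightarrow> ('g \<Rightarrow> 'f \<Rightarrow> 'f) \<Rightarrow> 'f \<Rightarrow> nat \<Rightarrow> (nat \<Rightarrow> nat \<Rightarrow> 'g \<Rightarrow> 'k::zero)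
    \<Rightarrow> nat \<Rightarrow> nat \<times> 'g \<Rightarrow> 'k" where
  "V_coaction G lact f m a = (\<lambda>i (j, g).
     if j \<in> {1..m} \<and> g \<in> stab G lact f then a j i g else 0)"

text \<open>Right H'_f-comodule structure of V \<otimes> kf (identified with V via v \<otimes> f \<mapsto> v):
  v^(i) \<otimes> f \<mapsto> \<Sum>_j \<Sum>_{g\<in>G_f} a_{ji}^g v^(j) \<otimes> f \<otimes> p_g#f.\<close>
definition Vf_coaction ::
  "('g, 'b) monoid_scheme \<Rightarrow> ('g \<Rightarrow> 'f \<Rightarrow> 'f) \<Rightarrow> 'f \<Rightarrow> nat \<Rightarrow> (nat \<Rightarrow> nat \<Rightarrow> 'g \<Rightarrow> 'k::zero)
    \<Rightarrow> nat \<Rightarrow> nat \<times> ('g \<times> 'f) \<Rightarrow> 'k" where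
  "Vf_coaction G lact f m a = (\<lambda>i (j, (g, x)).
     if j \<in> {1..m} \<and> g \<in> stab G lact f \<and> x = f then a j i g else 0)"

text \<open>Left H'_f-coaction on H: (\<pi>_f \<otimes> id) \<Delta>.\<close>
definition H_left_coaction ::
  "('g, 'b) monoid_scheme \<Rightarrow> ('g \<Rightarrow> 'f \<Rightarrow> 'f) \<Rightarrow> ('g \<Rightarrow> 'g \<Rightarrow> 'f \<Rightarrow> 'k::zero) \<Rightarrow> 'f
    \<Rightarrow> 'g \<times> 'f \<Rightarrow> ('g \<times> 'f) \<times> ('g \<times> 'f) \<Rightarrow> 'k" where
  "H_left_coaction G lact \<tau> f = (\<lambda>b ((h1, x1), c).
     if h1 \<in> stab G lact f then H_comult G lact \<tau> b ((h1, x1), c) else 0)"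

text \<open>The induced comodule \<tilde>V = (V \<otimes> kf) \<box>_{H'_f} H, as a subspace of V \<otimes> H
  (basis v^(i) \<otimes> p_g#x indexed by (i,(g,x))).\<close>
definition induced ::
  "('f, 'a) monoid_scheme \<Rightarrow> ('g, 'b) monoid_scheme \<Rightarrow> ('g \<Rightarrow> 'f \<Rightarrow> 'f)
    \<Rightarrow> ('g \<Rightarrow> 'g \<Rightarrow> 'f \<Rightarrow> 'k::comm_semiring_1) \<Rightarrow> 'f \<Rightarrow> nat \<Rightarrow> (nat \<Rightarrow> nat \<Rightarrow> 'g \<Rightarrow> 'k)
    \<Rightarrow> (nat \<times> ('g \<times> 'f) \<Rightarrow> 'k) set" where
  "induced F G lact \<tau> f m a =
     {x \<in> vecs ({1..m} \<times> (carrier G \<times> carrier F)).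
        reassoc (lin (tens_id_r (Vf_coaction G lact f m a)) x)
          = lin (tens_id_l (H_left_coaction G lact \<tau> f)) x}"

text \<open>The coaction id \<otimes> \<Delta> of \<tilde>V, by components: the H-component at basis element c.\<close>
definition induced_coaction_comp ::
  "('g, 'b) monoid_scheme \<Rightarrow> ('g \<Rightarrow> 'f \<Rightarrow> 'f) \<Rightarrow> ('g \<Rightarrow> 'g \<Rightarrow> 'f \<Rightarrow> 'k::comm_semiring_1)
    \<Rightarrow> 'g \<times> 'f \<Rightarrow> (nat \<times> ('g \<times> 'f) \<Rightarrow> 'k) \<Rightarrow> (nat \<times> ('g \<times> 'f) \<Rightarrow> 'k)" where
  "induced_coaction_comp G lact \<tau> c x =
     (\<lambda>(i, b). lin (tens_id_l (H_comult G lact \<tau>)) x (i, (b, c)))"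

end

theory Submission
  imports Defs
begin

lemma sum_fun_app: "(\<Sum>i\<in>A. f i) x = (\<Sum>i\<in>A. f i x)"
  by (induction A rule: infinite_finite_induct) auto

interpretation fm: vector_space "fscale :: 'k::field \<Rightarrow> ('i \<Rightarrow> 'k) \<Rightarrow> ('i \<Rightarrow> 'k)"
  by unfold_locales (auto simp: fscale_def fun_eq_iff algebra_simps)

lemma trace_lemma:
  fixes B :: "('i \<Rightarrow> 'k::field) set"
  assumes basis: "is_basis M B" and K: "finite K" and u: "\<forall>k\<in>K. u k \<in> M"
    and L: "\<forall>b\<in>B. L b = (\<Sum>k\<in>K. fscale (cf k * b (pt k)) (u k))"
  shows "(\<Sum>b\<in>B. fm.representation B (L b) b) = (\<Sum>k\<in>K. cf k * u k (pt k))"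
proof -
  have fin: "finite B" and ind: "\<not> fm.dependent B" and sp: "fm.span B = M"
    using basis by (auto simp: is_basis_def)
  have uS: "u k \<in> fm.span B" if "k \<in> K" for k using u that sp by auto
  have "fm.representation B (L b) b = (\<Sum>k\<in>K. (cf k * b (pt k)) * fm.representation B (u k) b)"
    if "b \<in> B" for b
  proof -
    have "fm.representation B (L b) = fm.representation B (\<Sum>k\<in>K. fscale (cf k * b (pt k)) (u k))"
      using L that by simp
    also have "\<dots> = (\<lambda>c. \<Sum>k\<in>K. fm.representation B (fscale (cf k * b (pt k)) (u k)) c)"
      by (rule fm.representation_sum[OF ind]) (use uS in \<open>auto intro: fm.span_scale\<close>)
    also have "\<dots> = (\<lambda>c. \<Sum>k\<in>K. (cf k * b (pt k)) * fm.representation B (u k) c)"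
      by (intro ext sum.cong refl) (simp add: fm.representation_scale[OF ind uS])
    finally show ?thesis by simp
  qed
  hence "(\<Sum>b\<in>B. fm.representation B (L b) b) = (\<Sum>b\<in>B. \<Sum>k\<in>K. (cf k * b (pt k)) * fm.representation B (u k) b)"
    by simp
  also have "\<dots> = (\<Sum>k\<in>K. cf k * (\<Sum>b\<in>B. fm.representation B (u k) b * b (pt k)))"
    by (subst sum.swap) (simp add: sum_distrib_left mult_ac)
  also have "\<dots> = (\<Sum>k\<in>K. cf k * u k (pt k))"
  proof (intro sum.cong refl)
    fix k assume k: "k \<in> K"
    have "(\<Sum>b\<in>B. fm.representation B (u k) b * b (pt k)) = (\<Sum>b\<in>B. fscale (fm.representation B (u k) b) b) (pt k)"
      by (simp add: sum_fun_app fscale_def)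
    also have "\<dots> = u k (pt k)"
      using fm.sum_representation_eq[OF ind uS[OF k] fin order_refl] by simp
    finally show "cf k * (\<Sum>b\<in>B. fm.representation B (u k) b * b (pt k)) = cf k * u k (pt k)" by simp
  qed
  finally show ?thesis .
qed

lemma lin_tens_id_r:
  assumes x: "x \<in> vecs (I \<times> C)" and I: "finite I"
  shows "lin (tens_id_r T) x (j, c) = (\<Sum>i\<in>I. x (i, c) * T i j)"
proof -
  have fs: "finite (fsupp x)" "fsupp x \<subseteq> I \<times> C" using x by (auto simp: vecs_def)
  have "lin (tens_id_r T) x (j, c) = (\<Sum>p\<in>fsupp x. x p * (if snd p = c then T (fst p) j else 0))"
    unfolding lin_def tens_id_r_def by (auto simp: case_prod_beta intro!: sum.cong)
  also have "\<dots> = (\<Sum>p\<in>fsupp x \<union> I \<times> {c}. x p * (if snd p = c then T (fst p) j else 0))"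
    by (rule sum.mono_neutral_left) (use fs I in \<open>auto simp: fsupp_def\<close>)
  also have "\<dots> = (\<Sum>p\<in>I \<times> {c}. x p * (if snd p = c then T (fst p) j else 0))"
    by (rule sum.mono_neutral_right) (use fs I in \<open>auto simp: fsupp_def\<close>)
  also have "\<dots> = (\<Sum>i\<in>I. x (i, c) * T i j)"
  proof -
    have "I \<times> {c} = (\<lambda>i. (i, c)) ` I" by auto
    moreover have "inj_on (\<lambda>i. (i, c)) I" by (auto simp: inj_on_def)
    ultimately show ?thesis by (simp add: sum.reindex)
  qed
  finally show ?thesis .
qed

lemma lin_tens_id_l_single:
  assumes x: "x \<in> vecs (I \<times> B0)" and z: "\<forall>b\<in>B0. b \<noteq> b0 \<longrightarrow> T b d = 0"
  shows "lin (tens_id_l T) x (j, d) = x (j, b0) * T b0 d"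
proof -
  have fs: "finite (fsupp x)" "fsupp x \<subseteq> I \<times> B0" using x by (auto simp: vecs_def)
  have "lin (tens_id_l T) x (j, d) = (\<Sum>p\<in>fsupp x. x p * (if j = fst p then T (snd p) d else 0))"
    unfolding lin_def tens_id_l_def by (auto simp: case_prod_beta intro!: sum.cong)
  also have "\<dots> = (\<Sum>p\<in>fsupp x. if p = (j, b0) then x (j, b0) * T b0 d else 0)"
    by (rule sum.cong) (use fs z in \<open>auto simp: fsupp_def\<close>)
  also have "\<dots> = x (j, b0) * T b0 d"
    using fs by (auto simp: fsupp_def)
  finally show ?thesis .
qed

lemma lin_zero:
  assumes "\<forall>p\<in>fsupp x. T p d = 0"
  shows "lin T x d = 0"
  using assms by (simp add: lin_def)

lemma lin_single:
  assumes x: "finite (fsupp x)" and z: "\<forall>p\<in>fsupp x. p \<noteq> p0 \<longrightarrow> T p d = 0"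
  shows "lin T x d = x p0 * T p0 d"
proof -
  have "lin T x d = (\<Sum>p\<in>fsupp x. if p = p0 then x p0 * T p0 d else 0)"
    unfolding lin_def by (rule sum.cong) (use z in auto)
  also have "\<dots> = x p0 * T p0 d"
    using x by (auto simp: fsupp_def)
  finally show ?thesis .
qed

lemma (in group) inv_cancel_ll [simp]: "a \<in> carrier G \<Longrightarrow> b \<in> carrier G \<Longrightarrow> inv a \<otimes> (a \<otimes> b) = b"
  by (simp add: m_assoc[symmetric])
lemma (in group) inv_cancel_lr [simp]: "a \<in> carrier G \<Longrightarrow> b \<in> carrier G \<Longrightarrow> a \<otimes> (inv a \<otimes> b) = b"
  by (simp add: m_assoc[symmetric])

locale P52 =
  fixes F :: "('f, 'a) monoid_scheme" and G :: "('g, 'b) monoid_scheme"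
    and lact :: "'g \<Rightarrow> 'f \<Rightarrow> 'f" and ract :: "'g \<Rightarrow> 'f \<Rightarrow> 'g"
    and \<sigma> :: "'g \<Rightarrow> 'f \<Rightarrow> 'f \<Rightarrow> 'k::field" and \<tau> :: "'g \<Rightarrow> 'g \<Rightarrow> 'f \<Rightarrow> 'k"
    and f :: 'f and T :: "'g set" and m :: nat and a :: "nat \<Rightarrow> nat \<Rightarrow> 'g \<Rightarrow> 'k"
  assumes mp: "matched_pair F G lact ract"
    and finG: "finite (carrier G)"
    and cp: "cocycle_pair F G lact ract \<sigma> \<tau>"
    and fF: "f \<in> carrier F"
    and TG: "T \<subseteq> carrier G"
    and Tcos: "\<forall>g\<in>carrier G. \<exists>!z. z \<in> T \<and> g \<in> stab G lact f #>\<^bsub>G\<^esub> z"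
    and com: "right_comodule (stab G lact f) (kGf_comult G lact \<tau> f) (kGf_counit G) {1..m}
           (V_coaction G lact f m a)"
begin

abbreviation "S \<equiv> stab G lact f"
abbreviation "I \<equiv> {1..m}"

sublocale G: group G using mp by (simp add: matched_pair_def)

lemma lact_closed: "g \<in> carrier G \<Longrightarrow> x \<in> carrier F \<Longrightarrow> lact g x \<in> carrier F"
  using mp by (simp add: matched_pair_def)
lemma lact_one: "x \<in> carrier F \<Longrightarrow> lact \<one>\<^bsub>G\<^esub> x = x"
  using mp by (simp add: matched_pair_def)
lemma lact_mult: "g \<in> carrier G \<Longrightarrow> g' \<in> carrier G \<Longrightarrow> x \<in> carrier F \<Longrightarrow>
   lact (g \<otimes>\<^bsub>G\<^esub> g') x = lact g (lact g' x)"
  using mp by (simp add: matched_pair_def)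

lemma tau_nz: "g \<in> carrier G \<Longrightarrow> g' \<in> carrier G \<Longrightarrow> x \<in> carrier F \<Longrightarrow> \<tau> g g' x \<noteq> 0"
  using cp by (simp add: cocycle_pair_def)
lemma tau_one_l: "g \<in> carrier G \<Longrightarrow> x \<in> carrier F \<Longrightarrow> \<tau> \<one>\<^bsub>G\<^esub> g x = 1"
  using cp by (simp add: cocycle_pair_def)
lemma tau_one_r: "g \<in> carrier G \<Longrightarrow> x \<in> carrier F \<Longrightarrow> \<tau> g \<one>\<^bsub>G\<^esub> x = 1"
  using cp by (simp add: cocycle_pair_def)
lemma tau_coc: "g \<in> carrier G \<Longrightarrow> g' \<in> carrier G \<Longrightarrow> g'' \<in> carrier G \<Longrightarrow> x \<in> carrier F \<Longrightarrow>
   \<tau> g g' (lact g'' x) * \<tau> (g \<otimes>\<^bsub>G\<^esub> g') g'' x = \<tau> g (g' \<otimes>\<^bsub>G\<^esub> g'') x * \<tau> g' g'' x"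
  using cp unfolding cocycle_pair_def by blast

lemma S_G: "S \<subseteq> carrier G" by (auto simp: stab_def)
lemma one_S: "\<one>\<^bsub>G\<^esub> \<in> S" using fF lact_one by (auto simp: stab_def)
lemma S_mult: "g \<in> S \<Longrightarrow> g' \<in> S \<Longrightarrow> g \<otimes>\<^bsub>G\<^esub> g' \<in> S"
  using fF by (auto simp: stab_def lact_mult)
lemma S_inv: "g \<in> S \<Longrightarrow> inv\<^bsub>G\<^esub> g \<in> S"
proof -
  assume g: "g \<in> S"
  hence gG: "g \<in> carrier G" and gf: "lact g f = f" by (auto simp: stab_def)
  have "lact (inv\<^bsub>G\<^esub> g) f = lact (inv\<^bsub>G\<^esub> g) (lact g f)" using gf by simp
  also have "\<dots> = lact (inv\<^bsub>G\<^esub> g \<otimes>\<^bsub>G\<^esub> g) f" using gG fF lact_mult[of "inv\<^bsub>G\<^esub> g" g f] by simp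
  also have "\<dots> = f" using gG fF by (simp add: lact_one)
  finally show ?thesis using gG by (simp add: stab_def)
qed

lemma coset_iff: "g \<in> carrier G \<Longrightarrow> z \<in> carrier G \<Longrightarrow> g \<in> S #>\<^bsub>G\<^esub> z \<longleftrightarrow> g \<otimes>\<^bsub>G\<^esub> inv\<^bsub>G\<^esub> z \<in> S"
proof
  assume g: "g \<in> carrier G" and z: "z \<in> carrier G"
  { assume "g \<in> S #>\<^bsub>G\<^esub> z"
    then obtain h where h: "h \<in> S" "g = h \<otimes>\<^bsub>G\<^esub> z" by (auto simp: r_coset_def)
    then show "g \<otimes>\<^bsub>G\<^esub> inv\<^bsub>G\<^esub> z \<in> S" using z S_G by (auto simp: G.m_assoc) }
  { assume "g \<otimes>\<^bsub>G\<^esub> inv\<^bsub>G\<^esub> z \<in> S"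
    moreover have "g = (g \<otimes>\<^bsub>G\<^esub> inv\<^bsub>G\<^esub> z) \<otimes>\<^bsub>G\<^esub> z" using g z by (simp add: G.m_assoc)
    ultimately show "g \<in> S #>\<^bsub>G\<^esub> z" unfolding r_coset_def by blast }
qed

lemma T_uniq: "z \<in> T \<Longrightarrow> z' \<in> T \<Longrightarrow> z' \<otimes>\<^bsub>G\<^esub> inv\<^bsub>G\<^esub> z \<in> S \<Longrightarrow> z' = z"
proof -
  assume z: "z \<in> T" and z': "z' \<in> T" and s: "z' \<otimes>\<^bsub>G\<^esub> inv\<^bsub>G\<^esub> z \<in> S"
  have zG: "z \<in> carrier G" "z' \<in> carrier G" using z z' TG by auto
  have "z' \<in> S #>\<^bsub>G\<^esub> z" using s zG coset_iff by simp
  moreover have "z' \<in> S #>\<^bsub>G\<^esub> z'" using zG coset_iff one_S by simp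
  ultimately show ?thesis using Tcos zG z z' by blast
qed

lemma T_ex: "h \<in> carrier G \<Longrightarrow> \<exists>z\<in>T. h \<otimes>\<^bsub>G\<^esub> inv\<^bsub>G\<^esub> z \<in> S"
  using Tcos coset_iff TG by blast


abbreviation "\<rho> \<equiv> V_coaction G lact f m a"

lemma rho_vecs: "k \<in> I \<Longrightarrow> \<rho> k \<in> vecs (I \<times> S)"
  using com by (simp add: right_comodule_def)

lemma a_one: "j \<in> I \<Longrightarrow> k \<in> I \<Longrightarrow> a j k \<one>\<^bsub>G\<^esub> = (if j = k then 1 else 0)"
proof -
  assume j: "j \<in> I" and k: "k \<in> I"
  have eq: "lin (\<lambda>(j, c) j'. if j' = j then kGf_counit G c else 0) (\<rho> k) = (\<lambda>j. if j = k then 1 else 0)"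
    using com k by (simp add: right_comodule_def)
  have fin: "finite (fsupp (\<rho> k))" using rho_vecs[OF k] by (simp add: vecs_def)
  have "lin (\<lambda>(j, c) j'. if j' = j then kGf_counit G c else 0) (\<rho> k) j
     = \<rho> k (j, \<one>\<^bsub>G\<^esub>) * (\<lambda>(j, c) j'. if j' = j then (kGf_counit G c :: 'k) else 0) (j, \<one>\<^bsub>G\<^esub>) j"
    by (rule lin_single[OF fin]) (auto simp: kGf_counit_def split: if_splits)
  also have "\<dots> = a j k \<one>\<^bsub>G\<^esub>" using j one_S by (simp add: V_coaction_def kGf_counit_def)
  finally show ?thesis using eq by (metis)
qed

lemma a_mult: "j \<in> I \<Longrightarrow> k \<in> I \<Longrightarrow> g \<in> S \<Longrightarrow> g' \<in> S \<Longrightarrow>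
  (\<Sum>i\<in>I. a j i g * a i k g') = \<tau> g g' f * a j k (g \<otimes>\<^bsub>G\<^esub> g')"
proof -
  assume j: "j \<in> I" and k: "k \<in> I" and g: "g \<in> S" and g': "g' \<in> S"
  have gG: "g \<in> carrier G" "g' \<in> carrier G" using g g' S_G by auto
  have eq: "reassoc (lin (tens_id_r \<rho>) (\<rho> k)) (j, (g, g')) = lin (tens_id_l (kGf_comult G lact \<tau> f)) (\<rho> k) (j, (g, g'))"
    using com k by (simp add: right_comodule_def)
  have "reassoc (lin (tens_id_r \<rho>) (\<rho> k)) (j, (g, g')) = lin (tens_id_r \<rho>) (\<rho> k) ((j, g), g')"
    by (simp add: reassoc_def)
  also have "\<dots> = (\<Sum>i\<in>I. \<rho> k (i, g') * \<rho> i (j, g))"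
    by (rule lin_tens_id_r[OF rho_vecs[OF k]]) simp
  also have "\<dots> = (\<Sum>i\<in>I. a j i g * a i k g')"
    using j g g' by (auto simp: V_coaction_def intro!: sum.cong)
  finally have l: "reassoc (lin (tens_id_r \<rho>) (\<rho> k)) (j, (g, g')) = (\<Sum>i\<in>I. a j i g * a i k g')" .
  have "lin (tens_id_l (kGf_comult G lact \<tau> f)) (\<rho> k) (j, (g, g')) = \<rho> k (j, g \<otimes>\<^bsub>G\<^esub> g') * kGf_comult G lact \<tau> f (g \<otimes>\<^bsub>G\<^esub> g') (g, g')"
  proof (rule lin_tens_id_l_single[OF rho_vecs[OF k]], intro ballI impI)
    fix b assume b: "b \<in> S" "b \<noteq> g \<otimes>\<^bsub>G\<^esub> g'"
    have "g \<noteq> b \<otimes>\<^bsub>G\<^esub> inv\<^bsub>G\<^esub> g'" using b gG S_G G.inv_solve_right[of g b g'] by auto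
    then show "kGf_comult G lact \<tau> f b (g, g') = 0" by (simp add: kGf_comult_def)
  qed
  also have "\<dots> = a j k (g \<otimes>\<^bsub>G\<^esub> g') * \<tau> g g' f"
    using j g g' gG S_mult by (simp add: V_coaction_def kGf_comult_def G.m_assoc)
  finally show ?thesis using eq l by (simp add: mult.commute)
qed


abbreviation "GF \<equiv> carrier G \<times> carrier F"
abbreviation "Vt \<equiv> induced F G lact \<tau> f m a"

definition Cnd :: "(nat \<times> ('g \<times> 'f) \<Rightarrow> 'k) \<Rightarrow> bool" where
  "Cnd x \<longleftrightarrow> (\<forall>j\<in>I. \<forall>g\<in>S. \<forall>h y x'.
     (if x' = f then (\<Sum>i\<in>I. x (i, (h, y)) * a j i g) else 0)
     = (if h \<in> carrier G \<and> x' = lact h y then x (j, (g \<otimes>\<^bsub>G\<^esub> h, y)) * \<tau> g h y else 0))"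

lemma CndD: "Cnd x \<Longrightarrow> j \<in> I \<Longrightarrow> g \<in> S \<Longrightarrow>
     (if x' = f then (\<Sum>i\<in>I. x (i, (h, y)) * a j i g) else 0)
     = (if h \<in> carrier G \<and> x' = lact h y then x (j, (g \<otimes>\<^bsub>G\<^esub> h, y)) * \<tau> g h y else 0)"
  unfolding Cnd_def by blast

lemma vecsD: "x \<in> vecs A \<Longrightarrow> p \<notin> A \<Longrightarrow> x p = 0"
  by (auto simp: vecs_def fsupp_def)

lemma E1:
  assumes x: "x \<in> vecs (I \<times> GF)"
  shows "reassoc (lin (tens_id_r (Vf_coaction G lact f m a)) x) (j, ((g, x'), c))
     = (if j \<in> I \<and> g \<in> S \<and> x' = f then (\<Sum>i\<in>I. x (i, c) * a j i g) else 0)"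
proof -
  have "reassoc (lin (tens_id_r (Vf_coaction G lact f m a)) x) (j, ((g, x'), c))
      = lin (tens_id_r (Vf_coaction G lact f m a)) x ((j, (g, x')), c)"
    by (simp add: reassoc_def)
  also have "\<dots> = (\<Sum>i\<in>I. x (i, c) * Vf_coaction G lact f m a i (j, (g, x')))"
    by (rule lin_tens_id_r[OF x]) simp
  also have "\<dots> = (if j \<in> I \<and> g \<in> S \<and> x' = f then (\<Sum>i\<in>I. x (i, c) * a j i g) else 0)"
    by (auto simp: Vf_coaction_def)
  finally show ?thesis .
qed

lemma E2:
  assumes x: "x \<in> vecs (I \<times> GF)"
  shows "lin (tens_id_l (H_left_coaction G lact \<tau> f)) x (j, ((g, x'), (h, y)))
     = (if g \<in> S \<and> h \<in> carrier G \<and> x' = lact h y then x (j, (g \<otimes>\<^bsub>G\<^esub> h, y)) * \<tau> g h y else 0)"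
proof -
  have "lin (tens_id_l (H_left_coaction G lact \<tau> f)) x (j, ((g, x'), (h, y)))
     = x (j, (g \<otimes>\<^bsub>G\<^esub> h, y)) * H_left_coaction G lact \<tau> f (g \<otimes>\<^bsub>G\<^esub> h, y) ((g, x'), (h, y))"
  proof (rule lin_tens_id_l_single[OF x], intro ballI impI)
    fix b assume b: "b \<in> GF" "b \<noteq> (g \<otimes>\<^bsub>G\<^esub> h, y)"
    obtain g0 y0 where b0: "b = (g0, y0)" by (cases b)
    have "H_comult G lact \<tau> (g0, y0) ((g, x'), (h, y)) = 0"
    proof (rule ccontr)
      assume "H_comult G lact \<tau> (g0, y0) ((g, x'), (h, y)) \<noteq> 0"
      hence "h \<in> carrier G" "g = g0 \<otimes>\<^bsub>G\<^esub> inv\<^bsub>G\<^esub> h" "y = y0"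
        by (auto simp: H_comult_def split: if_splits)
      moreover have "g0 \<in> carrier G" using b b0 by auto
      ultimately have "g0 = g \<otimes>\<^bsub>G\<^esub> h" by (simp add: G.m_assoc)
      with \<open>y = y0\<close> b b0 show False by simp
    qed
    then show "H_left_coaction G lact \<tau> f b ((g, x'), (h, y)) = 0"
      by (simp add: H_left_coaction_def b0)
  qed
  also have "\<dots> = (if g \<in> S \<and> h \<in> carrier G \<and> x' = lact h y then x (j, (g \<otimes>\<^bsub>G\<^esub> h, y)) * \<tau> g h y else 0)"
    using S_G by (auto simp: H_left_coaction_def H_comult_def G.m_assoc)
  finally show ?thesis .
qed

lemma induced_iff: "x \<in> Vt \<longleftrightarrow> x \<in> vecs (I \<times> GF) \<and> Cnd x"
proof (cases "x \<in> vecs (I \<times> GF)")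
  case True
  note x = True
  have "(reassoc (lin (tens_id_r (Vf_coaction G lact f m a)) x)
        = lin (tens_id_l (H_left_coaction G lact \<tau> f)) x) \<longleftrightarrow> Cnd x"
  proof
    assume eq: "reassoc (lin (tens_id_r (Vf_coaction G lact f m a)) x)
        = lin (tens_id_l (H_left_coaction G lact \<tau> f)) x"
    show "Cnd x" unfolding Cnd_def
    proof (intro ballI allI)
      fix j g h y x' assume j: "j \<in> I" and g: "g \<in> S"
      have "reassoc (lin (tens_id_r (Vf_coaction G lact f m a)) x) (j, ((g, x'), (h, y)))
        = lin (tens_id_l (H_left_coaction G lact \<tau> f)) x (j, ((g, x'), (h, y)))" using eq by simp
      then show "(if x' = f then (\<Sum>i\<in>I. x (i, (h, y)) * a j i g) else 0)
     = (if h \<in> carrier G \<and> x' = lact h y then x (j, (g \<otimes>\<^bsub>G\<^esub> h, y)) * \<tau> g h y else 0)"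
        using j g by (simp add: E1[OF x] E2[OF x])
    qed
  next
    assume c: "Cnd x"
    show "reassoc (lin (tens_id_r (Vf_coaction G lact f m a)) x)
        = lin (tens_id_l (H_left_coaction G lact \<tau> f)) x"
    proof (rule ext, clarify)
      fix j g x' h y
      show "reassoc (lin (tens_id_r (Vf_coaction G lact f m a)) x) (j, ((g, x'), (h, y)))
        = lin (tens_id_l (H_left_coaction G lact \<tau> f)) x (j, ((g, x'), (h, y)))"
      proof (cases "j \<in> I \<and> g \<in> S")
        case True
        then show ?thesis using c unfolding Cnd_def by (simp add: E1[OF x] E2[OF x])
      next
        case False
        then show ?thesis using vecsD[OF x, of "(j, (g \<otimes>\<^bsub>G\<^esub> h, y))"] by (auto simp: E1[OF x] E2[OF x])
      qed
    qed
  qed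
  then show ?thesis using x by (simp add: induced_def)
qed (simp add: induced_def)


lemma V1: "x \<in> Vt \<Longrightarrow> lact h y \<noteq> f \<Longrightarrow> x (j, (h, y)) = 0"
proof -
  assume x: "x \<in> Vt" and ne: "lact h y \<noteq> f"
  have xv: "x \<in> vecs (I \<times> GF)" and c: "Cnd x" using x induced_iff by auto
  show ?thesis
  proof (cases "(j, (h, y)) \<in> I \<times> GF")
    case True
    then have "j \<in> I" "h \<in> carrier G" "y \<in> carrier F" by auto
    with CndD[OF c _ one_S, where j=j and h=h and y=y and x'="lact h y"] ne
    show ?thesis by (simp add: tau_one_l)
  qed (simp add: vecsD[OF xv])
qed

lemma V2: "x \<in> Vt \<Longrightarrow> j \<in> I \<Longrightarrow> g \<in> S \<Longrightarrow> h \<in> carrier G \<Longrightarrow> lact h y = f \<Longrightarrow>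
  (\<Sum>i\<in>I. x (i, (h, y)) * a j i g) = x (j, (g \<otimes>\<^bsub>G\<^esub> h, y)) * \<tau> g h y"
  using induced_iff[of x] unfolding Cnd_def by (metis (no_types, lifting))

lemma vecs_add: "(x :: 'i \<Rightarrow> 'k) \<in> vecs A \<Longrightarrow> y \<in> vecs A \<Longrightarrow> x + y \<in> vecs A"
proof -
  assume x: "x \<in> vecs A" and y: "y \<in> vecs A"
  have "fsupp (x + y) \<subseteq> fsupp x \<union> fsupp y" by (auto simp: fsupp_def)
  with x y show ?thesis unfolding vecs_def by (auto intro: finite_subset)
qed

lemma vecs_scale: "(x :: 'i \<Rightarrow> 'k) \<in> vecs A \<Longrightarrow> fscale c x \<in> vecs A"
proof -
  assume x: "x \<in> vecs A"
  have "fsupp (fscale c x) \<subseteq> fsupp x" by (auto simp: fsupp_def fscale_def)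
  with x show ?thesis unfolding vecs_def by (auto intro: finite_subset)
qed

lemma Vt_subspace: "fm.subspace Vt"
proof (rule fm.subspaceI)
  show "0 \<in> Vt" unfolding induced_iff Cnd_def by (simp add: vecs_def fsupp_def)
next
  fix x y assume x: "x \<in> Vt" and y: "y \<in> Vt"
  hence xv: "x \<in> vecs (I \<times> GF)" "Cnd x" and yv: "y \<in> vecs (I \<times> GF)" "Cnd y" using induced_iff by auto
  have "Cnd (x + y)" unfolding Cnd_def
  proof (intro ballI allI)
    fix j g h y' x' assume j: "j \<in> I" and g: "g \<in> S"
    note hx = CndD[OF xv(2) j g, where h=h and y=y' and x'=x']
    note hy = CndD[OF yv(2) j g, where h=h and y=y' and x'=x']
    show "(if x' = f then \<Sum>i\<in>I. (x + y) (i, h, y') * a j i g else 0) =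
         (if h \<in> carrier G \<and> x' = lact h y' then (x + y) (j, g \<otimes>\<^bsub>G\<^esub> h, y') * \<tau> g h y' else 0)"
      using hx hy by (auto simp: sum.distrib distrib_right split: if_splits)
  qed
  then show "x + y \<in> Vt" using xv yv vecs_add induced_iff by blast
next
  fix c x assume x: "x \<in> Vt"
  hence xv: "x \<in> vecs (I \<times> GF)" "Cnd x" using induced_iff by auto
  have "Cnd (fscale c x)" unfolding Cnd_def
  proof (intro ballI allI)
    fix j g h y' x' assume j: "j \<in> I" and g: "g \<in> S"
    note hx = CndD[OF xv(2) j g, where h=h and y=y' and x'=x']
    show "(if x' = f then \<Sum>i\<in>I. fscale c x (i, h, y') * a j i g else 0) =
         (if h \<in> carrier G \<and> x' = lact h y' then fscale c x (j, g \<otimes>\<^bsub>G\<^esub> h, y') * \<tau> g h y' else 0)"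
      using hx by (auto simp: fscale_def mult.assoc sum_distrib_left[symmetric] split: if_splits)
  qed
  then show "fscale c x \<in> Vt" using xv vecs_scale induced_iff by blast
qed

lemma coact:
  assumes x: "x \<in> vecs (I \<times> GF)"
  shows "induced_coaction_comp G lact \<tau> (h2, x2) x (i, (h1, x1))
     = (if h1 \<in> carrier G \<and> h2 \<in> carrier G \<and> x1 = lact h2 x2 then \<tau> h1 h2 x2 * x (i, (h1 \<otimes>\<^bsub>G\<^esub> h2, x2)) else 0)"
proof (cases "h1 \<in> carrier G")
  case True
  have "induced_coaction_comp G lact \<tau> (h2, x2) x (i, (h1, x1))
     = lin (tens_id_l (H_comult G lact \<tau>)) x (i, ((h1, x1), (h2, x2)))"
    by (simp add: induced_coaction_comp_def)
  also have "\<dots> = x (i, (h1 \<otimes>\<^bsub>G\<^esub> h2, x2)) * H_comult G lact \<tau> (h1 \<otimes>\<^bsub>G\<^esub> h2, x2) ((h1, x1), (h2, x2))"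
  proof (rule lin_tens_id_l_single[OF x], intro ballI impI)
    fix b assume b: "b \<in> GF" "b \<noteq> (h1 \<otimes>\<^bsub>G\<^esub> h2, x2)"
    obtain g0 y0 where b0: "b = (g0, y0)" by (cases b)
    show "H_comult G lact \<tau> b ((h1, x1), (h2, x2)) = 0"
    proof (rule ccontr)
      assume "H_comult G lact \<tau> b ((h1, x1), (h2, x2)) \<noteq> 0"
      hence "h2 \<in> carrier G" "h1 = g0 \<otimes>\<^bsub>G\<^esub> inv\<^bsub>G\<^esub> h2" "x2 = y0"
        by (auto simp: H_comult_def b0 split: if_splits)
      moreover have "g0 \<in> carrier G" using b b0 by auto
      ultimately have "g0 = h1 \<otimes>\<^bsub>G\<^esub> h2" by (simp add: G.m_assoc)
      with \<open>x2 = y0\<close> b b0 show False by simp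
    qed
  qed
  also have "\<dots> = (if h1 \<in> carrier G \<and> h2 \<in> carrier G \<and> x1 = lact h2 x2 then \<tau> h1 h2 x2 * x (i, (h1 \<otimes>\<^bsub>G\<^esub> h2, x2)) else 0)"
    using True by (auto simp: H_comult_def G.m_assoc)
  finally show ?thesis .
next
  case False
  have "induced_coaction_comp G lact \<tau> (h2, x2) x (i, (h1, x1))
     = lin (tens_id_l (H_comult G lact \<tau>)) x (i, ((h1, x1), (h2, x2)))"
    by (simp add: induced_coaction_comp_def)
  also have "\<dots> = 0"
  proof (rule lin_zero, intro ballI)
    fix p assume p: "p \<in> fsupp x"
    obtain i' g0 y0 where p0: "p = (i', (g0, y0))" by (cases p) auto
    have g0: "g0 \<in> carrier G" using p p0 x by (auto simp: vecs_def)
    show "tens_id_l (H_comult G lact \<tau>) p (i, (h1, x1), h2, x2) = 0"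
      using False g0 by (auto simp: tens_id_l_def H_comult_def p0)
  qed
  finally show ?thesis using False by simp
qed

lemma closure:
  assumes x: "x \<in> Vt"
  shows "induced_coaction_comp G lact \<tau> (h2, x2) x \<in> Vt"
proof -
  have xv: "x \<in> vecs (I \<times> GF)" and c: "Cnd x" using x induced_iff by auto
  define w where "w = induced_coaction_comp G lact \<tau> (h2, x2) x"
  have w: "w (i, (h1, x1)) = (if h1 \<in> carrier G \<and> h2 \<in> carrier G \<and> x1 = lact h2 x2 then \<tau> h1 h2 x2 * x (i, (h1 \<otimes>\<^bsub>G\<^esub> h2, x2)) else 0)"
    for i h1 x1 unfolding w_def by (rule coact[OF xv])
  have sub: "fsupp w \<subseteq> (\<lambda>(i, (g, y)). (i, (g \<otimes>\<^bsub>G\<^esub> inv\<^bsub>G\<^esub> h2, lact h2 y))) ` fsupp x"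
  proof
    fix p assume p: "p \<in> fsupp w"
    obtain i h1 x1 where p0: "p = (i, (h1, x1))" by (cases p) auto
    have nz: "w (i, (h1, x1)) \<noteq> 0" using p p0 by (simp add: fsupp_def)
    hence h: "h1 \<in> carrier G" "h2 \<in> carrier G" "x1 = lact h2 x2" "x (i, (h1 \<otimes>\<^bsub>G\<^esub> h2, x2)) \<noteq> 0"
      by (auto simp: w split: if_splits)
    have "(i, (h1 \<otimes>\<^bsub>G\<^esub> h2, x2)) \<in> fsupp x" using h by (simp add: fsupp_def)
    moreover have "p = (\<lambda>(i, (g, y)). (i, (g \<otimes>\<^bsub>G\<^esub> inv\<^bsub>G\<^esub> h2, lact h2 y))) (i, (h1 \<otimes>\<^bsub>G\<^esub> h2, x2))"
      using h p0 by (simp add: G.m_assoc)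
    ultimately show "p \<in> (\<lambda>(i, (g, y)). (i, (g \<otimes>\<^bsub>G\<^esub> inv\<^bsub>G\<^esub> h2, lact h2 y))) ` fsupp x" by blast
  qed
  have sub2: "fsupp w \<subseteq> I \<times> GF"
  proof
    fix p assume p: "p \<in> fsupp w"
    obtain i h1 x1 where p0: "p = (i, (h1, x1))" by (cases p) auto
    have nz: "w (i, (h1, x1)) \<noteq> 0" using p p0 by (simp add: fsupp_def)
    hence h: "h1 \<in> carrier G" "h2 \<in> carrier G" "x1 = lact h2 x2" "x (i, (h1 \<otimes>\<^bsub>G\<^esub> h2, x2)) \<noteq> 0"
      by (auto simp: w split: if_splits)
    hence "i \<in> I" "x2 \<in> carrier F" using vecsD[OF xv] by force+
    then show "p \<in> I \<times> GF" using h p0 lact_closed by auto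
  qed
  have wv: "w \<in> vecs (I \<times> GF)"
    using sub sub2 xv unfolding vecs_def by (auto intro: finite_subset)
  have "Cnd w" unfolding Cnd_def
  proof (intro ballI allI)
    fix j g h y x' assume j: "j \<in> I" and g: "g \<in> S"
    have gG: "g \<in> carrier G" using g S_G by auto
    show "(if x' = f then \<Sum>i\<in>I. w (i, h, y) * a j i g else 0) =
         (if h \<in> carrier G \<and> x' = lact h y then w (j, g \<otimes>\<^bsub>G\<^esub> h, y) * \<tau> g h y else 0)"
    proof (cases "h \<in> carrier G \<and> h2 \<in> carrier G \<and> y = lact h2 x2 \<and> x2 \<in> carrier F")
      case True
      hence hG: "h \<in> carrier G" "h2 \<in> carrier G" and y: "y = lact h2 x2" and x2: "x2 \<in> carrier F" by auto
      have ghG: "g \<otimes>\<^bsub>G\<^esub> h \<in> carrier G" "h \<otimes>\<^bsub>G\<^esub> h2 \<in> carrier G" using gG hG by auto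
      note cx = CndD[OF c j g, where h="h \<otimes>\<^bsub>G\<^esub> h2" and y=x2 and x'=x']
      have l: "lact (h \<otimes>\<^bsub>G\<^esub> h2) x2 = lact h y" using hG x2 y lact_mult by simp
      have as: "g \<otimes>\<^bsub>G\<^esub> (h \<otimes>\<^bsub>G\<^esub> h2) = g \<otimes>\<^bsub>G\<^esub> h \<otimes>\<^bsub>G\<^esub> h2" using gG hG by (simp add: G.m_assoc)
      have co: "\<tau> g h (lact h2 x2) * \<tau> (g \<otimes>\<^bsub>G\<^esub> h) h2 x2 = \<tau> g (h \<otimes>\<^bsub>G\<^esub> h2) x2 * \<tau> h h2 x2"
        using tau_coc gG hG x2 by blast
      have "(if x' = f then \<Sum>i\<in>I. w (i, h, y) * a j i g else 0)
          = \<tau> h h2 x2 * (if x' = f then \<Sum>i\<in>I. x (i, (h \<otimes>\<^bsub>G\<^esub> h2, x2)) * a j i g else 0)"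
        using hG y by (simp add: w sum_distrib_left mult_ac)
      also have "\<dots> = \<tau> h h2 x2 * (if x' = lact h y then x (j, (g \<otimes>\<^bsub>G\<^esub> h \<otimes>\<^bsub>G\<^esub> h2, x2)) * \<tau> g (h \<otimes>\<^bsub>G\<^esub> h2) x2 else 0)"
        using cx ghG l as by simp
      also have "\<dots> = (if h \<in> carrier G \<and> x' = lact h y then w (j, g \<otimes>\<^bsub>G\<^esub> h, y) * \<tau> g h y else 0)"
        using hG ghG y co by (simp add: w mult_ac)
      finally show ?thesis .
    next
      case False
      have z1: "w (i, h, y) = 0" for i
      proof (cases "x2 \<in> carrier F")
        case True thus ?thesis using False by (auto simp: w)
      next
        case False thus ?thesis by (simp add: w vecsD[OF xv])
      qed
      have z2: "h \<in> carrier G \<Longrightarrow> w (j, g \<otimes>\<^bsub>G\<^esub> h, y) = 0"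
      proof (cases "x2 \<in> carrier F")
        case True thus "h \<in> carrier G \<Longrightarrow> ?thesis" using False by (auto simp: w)
      next
        case False thus "h \<in> carrier G \<Longrightarrow> ?thesis" by (simp add: w vecsD[OF xv])
      qed
      show ?thesis using z1 z2 by simp
    qed
  qed
  then show ?thesis using wv induced_iff w_def by blast
qed


definition yz :: "'g \<Rightarrow> 'f" where "yz z = lact (inv\<^bsub>G\<^esub> z) f"

definition e :: "'g \<Rightarrow> nat \<Rightarrow> nat \<times> ('g \<times> 'f) \<Rightarrow> 'k" where
  "e z k = (\<lambda>(j, (h, y)). if j \<in> I \<and> h \<in> carrier G \<and> h \<otimes>\<^bsub>G\<^esub> inv\<^bsub>G\<^esub> z \<in> S \<and> y = yz z
     then inverse (\<tau> (h \<otimes>\<^bsub>G\<^esub> inv\<^bsub>G\<^esub> z) z y) * a j k (h \<otimes>\<^bsub>G\<^esub> inv\<^bsub>G\<^esub> z) else 0)"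

lemma yz_F: "z \<in> carrier G \<Longrightarrow> yz z \<in> carrier F"
  using fF lact_closed by (simp add: yz_def)

lemma lact_yz: "z \<in> carrier G \<Longrightarrow> g' \<in> S \<Longrightarrow> lact (g' \<otimes>\<^bsub>G\<^esub> z) (yz z) = f"
proof -
  assume z: "z \<in> carrier G" and g': "g' \<in> S"
  have gG: "g' \<in> carrier G" using g' S_G by auto
  have "lact (g' \<otimes>\<^bsub>G\<^esub> z) (yz z) = lact ((g' \<otimes>\<^bsub>G\<^esub> z) \<otimes>\<^bsub>G\<^esub> inv\<^bsub>G\<^esub> z) f"
    using lact_mult[of "g' \<otimes>\<^bsub>G\<^esub> z" "inv\<^bsub>G\<^esub> z" f] z gG fF by (simp add: yz_def)
  also have "\<dots> = lact g' f" using z gG by (simp add: G.m_assoc)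
  also have "\<dots> = f" using g' by (simp add: stab_def)
  finally show ?thesis .
qed

lemma lact_yz1: "z \<in> carrier G \<Longrightarrow> lact z (yz z) = f"
  using lact_yz[OF _ one_S] by simp

lemma e_Vt: assumes z: "z \<in> T" and k: "k \<in> I" shows "e z k \<in> Vt"
proof -
  have zG: "z \<in> carrier G" using z TG by auto
  have sub: "fsupp (e z k) \<subseteq> I \<times> (carrier G \<times> {yz z})"
    by (auto simp: fsupp_def e_def split: if_splits)
  have ev: "e z k \<in> vecs (I \<times> GF)"
    using sub finG yz_F[OF zG] unfolding vecs_def by (auto intro: finite_subset)
  have "Cnd (e z k)" unfolding Cnd_def
  proof (intro ballI allI)
    fix j g h y x' assume j: "j \<in> I" and g: "g \<in> S"
    have gG: "g \<in> carrier G" using g S_G by auto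
    show "(if x' = f then \<Sum>i\<in>I. e z k (i, h, y) * a j i g else 0) =
         (if h \<in> carrier G \<and> x' = lact h y then e z k (j, g \<otimes>\<^bsub>G\<^esub> h, y) * \<tau> g h y else 0)"
    proof (cases "h \<in> carrier G \<and> h \<otimes>\<^bsub>G\<^esub> inv\<^bsub>G\<^esub> z \<in> S \<and> y = yz z")
      case True
      define g' where "g' = h \<otimes>\<^bsub>G\<^esub> inv\<^bsub>G\<^esub> z"
      have hG: "h \<in> carrier G" and g': "g' \<in> S" and y: "y = yz z" using True g'_def by auto
      have g'G: "g' \<in> carrier G" using g' S_G by auto
      have h: "h = g' \<otimes>\<^bsub>G\<^esub> z" using hG zG by (simp add: g'_def G.m_assoc)
      have gh: "g \<otimes>\<^bsub>G\<^esub> h \<otimes>\<^bsub>G\<^esub> inv\<^bsub>G\<^esub> z = g \<otimes>\<^bsub>G\<^esub> g'"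
        using gG hG zG by (simp add: g'_def G.m_assoc)
      have gg'S: "g \<otimes>\<^bsub>G\<^esub> g' \<in> S" using S_mult g g' by blast
      have lh: "lact h y = f" using h y lact_yz zG g' by simp
      have yF: "y \<in> carrier F" using y yz_F zG by simp
      have co: "\<tau> g g' (lact z y) * \<tau> (g \<otimes>\<^bsub>G\<^esub> g') z y = \<tau> g (g' \<otimes>\<^bsub>G\<^esub> z) y * \<tau> g' z y"
        using tau_coc gG g'G zG yF by blast
      have lz: "lact z y = f" using y lact_yz1 zG by simp
      have nz: "\<tau> g' z y \<noteq> 0" "\<tau> (g \<otimes>\<^bsub>G\<^esub> g') z y \<noteq> 0" using tau_nz g'G gG zG yF by auto
      have "(\<Sum>i\<in>I. e z k (i, h, y) * a j i g) = inverse (\<tau> g' z y) * (\<Sum>i\<in>I. a j i g * a i k g')"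
        using hG g' y by (auto simp: e_def g'_def sum_distrib_left mult_ac intro!: sum.cong)
      also have "\<dots> = inverse (\<tau> g' z y) * \<tau> g g' f * a j k (g \<otimes>\<^bsub>G\<^esub> g')"
        using a_mult[OF j k g g'] by simp
      also have "\<dots> = inverse (\<tau> (g \<otimes>\<^bsub>G\<^esub> g') z y) * a j k (g \<otimes>\<^bsub>G\<^esub> g') * \<tau> g h y"
        using co lz nz h by (simp add: field_simps)
      also have "\<dots> = e z k (j, g \<otimes>\<^bsub>G\<^esub> h, y) * \<tau> g h y"
        using j gG hG gh gg'S y by (simp add: e_def)
      finally show ?thesis using lh hG by simp
    next
      case False
      have z1: "e z k (i, h, y) = 0" for i using False by (auto simp: e_def)
      have z2: "h \<in> carrier G \<Longrightarrow> e z k (j, g \<otimes>\<^bsub>G\<^esub> h, y) = 0"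
      proof -
        assume hG: "h \<in> carrier G"
        have "g \<otimes>\<^bsub>G\<^esub> h \<otimes>\<^bsub>G\<^esub> inv\<^bsub>G\<^esub> z \<in> S \<Longrightarrow> h \<otimes>\<^bsub>G\<^esub> inv\<^bsub>G\<^esub> z \<in> S"
        proof -
          assume s: "g \<otimes>\<^bsub>G\<^esub> h \<otimes>\<^bsub>G\<^esub> inv\<^bsub>G\<^esub> z \<in> S"
          have "inv\<^bsub>G\<^esub> g \<otimes>\<^bsub>G\<^esub> (g \<otimes>\<^bsub>G\<^esub> h \<otimes>\<^bsub>G\<^esub> inv\<^bsub>G\<^esub> z) \<in> S"
            using S_mult S_inv g s by blast
          also have "inv\<^bsub>G\<^esub> g \<otimes>\<^bsub>G\<^esub> (g \<otimes>\<^bsub>G\<^esub> h \<otimes>\<^bsub>G\<^esub> inv\<^bsub>G\<^esub> z) = h \<otimes>\<^bsub>G\<^esub> inv\<^bsub>G\<^esub> z"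
            using gG hG zG by (simp add: G.m_assoc[symmetric])
          finally show ?thesis .
        qed
        then show ?thesis using False hG by (auto simp: e_def)
      qed
      show ?thesis using z1 z2 by simp
    qed
  qed
  then show ?thesis using ev induced_iff by blast
qed

lemma e_delta: "z \<in> T \<Longrightarrow> z' \<in> T \<Longrightarrow> j \<in> I \<Longrightarrow> k \<in> I \<Longrightarrow>
  e z k (j, (z', yz z')) = (if z = z' \<and> j = k then 1 else 0)"
proof -
  assume z: "z \<in> T" and z': "z' \<in> T" and j: "j \<in> I" and k: "k \<in> I"
  have zG: "z \<in> carrier G" "z' \<in> carrier G" using z z' TG by auto
  show ?thesis
  proof (cases "z = z'")
    case True
    then show ?thesis using zG j k one_S by (simp add: e_def a_one tau_one_l yz_F)
  next
    case False
    then have "z' \<otimes>\<^bsub>G\<^esub> inv\<^bsub>G\<^esub> z \<notin> S" using T_uniq z z' by blast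
    then show ?thesis using False by (simp add: e_def)
  qed
qed


lemma finT: "finite T" using finG TG finite_subset by blast

lemma decomp:
  assumes x: "x \<in> Vt"
  shows "x = (\<Sum>q\<in>T \<times> I. fscale (x (snd q, (fst q, yz (fst q)))) (e (fst q) (snd q)))"
proof (rule ext, clarify)
  fix j h y
  have xv: "x \<in> vecs (I \<times> GF)" using x induced_iff by auto
  have "(\<Sum>q\<in>T \<times> I. fscale (x (snd q, (fst q, yz (fst q)))) (e (fst q) (snd q))) (j, h, y)
      = (\<Sum>z\<in>T. \<Sum>k\<in>I. x (k, (z, yz z)) * e z k (j, h, y))"
    by (simp add: sum_fun_app fscale_def sum.cartesian_product case_prod_beta)
  also have "\<dots> = x (j, h, y)"
  proof (cases "j \<in> I \<and> h \<in> carrier G")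
    case False
    then have "e z k (j, h, y) = 0" for z k by (auto simp: e_def)
    then show ?thesis using False vecsD[OF xv, of "(j, h, y)"] by auto
  next
    case True
    hence j: "j \<in> I" and hG: "h \<in> carrier G" by auto
    obtain z0 where z0: "z0 \<in> T" "h \<otimes>\<^bsub>G\<^esub> inv\<^bsub>G\<^esub> z0 \<in> S" using T_ex[OF hG] by blast
    have z0G: "z0 \<in> carrier G" using z0 TG by auto
    define g' where "g' = h \<otimes>\<^bsub>G\<^esub> inv\<^bsub>G\<^esub> z0"
    have g': "g' \<in> S" and g'G: "g' \<in> carrier G" using z0 S_G by (auto simp: g'_def)
    have h: "h = g' \<otimes>\<^bsub>G\<^esub> z0" using hG z0G by (simp add: g'_def G.m_assoc)
    have oth: "e z k (j, h, y) = 0" if "z \<in> T" "z \<noteq> z0" for z k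
    proof -
      have zG: "z \<in> carrier G" using that TG by auto
      have "h \<otimes>\<^bsub>G\<^esub> inv\<^bsub>G\<^esub> z \<notin> S"
      proof
        assume s: "h \<otimes>\<^bsub>G\<^esub> inv\<^bsub>G\<^esub> z \<in> S"
        have "inv\<^bsub>G\<^esub> (h \<otimes>\<^bsub>G\<^esub> inv\<^bsub>G\<^esub> z) \<otimes>\<^bsub>G\<^esub> (h \<otimes>\<^bsub>G\<^esub> inv\<^bsub>G\<^esub> z0) \<in> S"
          using S_mult S_inv s z0 by blast
        also have "inv\<^bsub>G\<^esub> (h \<otimes>\<^bsub>G\<^esub> inv\<^bsub>G\<^esub> z) \<otimes>\<^bsub>G\<^esub> (h \<otimes>\<^bsub>G\<^esub> inv\<^bsub>G\<^esub> z0) = z \<otimes>\<^bsub>G\<^esub> inv\<^bsub>G\<^esub> z0"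
          using hG zG z0G by (simp add: G.inv_mult_group G.m_assoc[symmetric]) (simp add: G.m_assoc)
        finally have "z = z0" using T_uniq that z0 by blast
        with that show False by simp
      qed
      then show ?thesis by (simp add: e_def)
    qed
    have "(\<Sum>z\<in>T. \<Sum>k\<in>I. x (k, (z, yz z)) * e z k (j, h, y))
        = (\<Sum>z\<in>T. if z = z0 then (\<Sum>k\<in>I. x (k, (z0, yz z0)) * e z0 k (j, h, y)) else 0)"
      by (rule sum.cong) (auto simp: oth)
    also have "\<dots> = (\<Sum>k\<in>I. x (k, (z0, yz z0)) * e z0 k (j, h, y))"
      using z0 finT by simp
    also have "\<dots> = x (j, h, y)"
    proof (cases "y = yz z0")
      case False
      have ez: "e z0 k (j, h, y) = 0" for k using False by (simp add: e_def)
      have "x (j, h, y) = 0"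
      proof (cases "y \<in> carrier F")
        case yF: True
        have "lact h y \<noteq> f"
        proof
          assume l: "lact h y = f"
          have "y = lact (inv\<^bsub>G\<^esub> h \<otimes>\<^bsub>G\<^esub> h) y" using hG yF lact_one by simp
          also have "\<dots> = lact (inv\<^bsub>G\<^esub> h) f" using l hG yF lact_mult[of "inv\<^bsub>G\<^esub> h" h y] by simp
          also have "\<dots> = lact (inv\<^bsub>G\<^esub> z0 \<otimes>\<^bsub>G\<^esub> inv\<^bsub>G\<^esub> g') f"
            using h g'G z0G by (simp add: G.inv_mult_group)
          also have "\<dots> = lact (inv\<^bsub>G\<^esub> z0) (lact (inv\<^bsub>G\<^esub> g') f)" using g'G z0G fF lact_mult by simp
          also have "\<dots> = yz z0" using S_inv[OF g'] by (simp add: stab_def yz_def)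
          finally show False using False by simp
        qed
        then show ?thesis using V1[OF x] by simp
      qed (simp add: vecsD[OF xv])
      then show ?thesis using ez by simp
    next
      case True
      have yF: "y \<in> carrier F" using True yz_F z0G by simp
      have ez: "e z0 k (j, h, y) = inverse (\<tau> g' z0 y) * a j k g'" for k
        using True j hG z0 by (simp add: e_def g'_def)
      have lz: "lact z0 y = f" using True lact_yz1 z0G by simp
      have "(\<Sum>k\<in>I. x (k, (z0, yz z0)) * e z0 k (j, h, y)) = inverse (\<tau> g' z0 y) * (\<Sum>k\<in>I. x (k, (z0, y)) * a j k g')"
        unfolding ez using True by (simp add: sum_distrib_left mult_ac)
      also have "\<dots> = inverse (\<tau> g' z0 y) * (x (j, (h, y)) * \<tau> g' z0 y)"
        using V2[OF x j g' z0G lz] h by simp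
      also have "\<dots> = x (j, h, y)" using tau_nz g'G z0G yF by simp
      finally show ?thesis .
    qed
    finally show ?thesis .
  qed
  finally show "x (j, h, y) = (\<Sum>q\<in>T \<times> I. fscale (x (snd q, (fst q, yz (fst q)))) (e (fst q) (snd q))) (j, h, y)"
    by simp
qed


definition E :: "(nat \<times> ('g \<times> 'f) \<Rightarrow> 'k) set" where
  "E = (\<lambda>q. e (fst q) (snd q)) ` (T \<times> I)"

lemma e_inj: "inj_on (\<lambda>q. e (fst q) (snd q)) (T \<times> I)"
proof (rule inj_onI, clarify)
  fix z k z' k' assume z: "z \<in> T" "k \<in> I" and z': "z' \<in> T" "k' \<in> I"
    and eq: "e (fst (z, k)) (snd (z, k)) = e (fst (z', k')) (snd (z', k'))"
  have "e z k (k, (z, yz z)) = e z' k' (k, (z, yz z))" using eq by simp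
  then have "(1::'k) = (if z' = z \<and> k = k' then 1 else 0)" using e_delta z z' by simp
  then show "z = z' \<and> k = k'" by (auto split: if_splits)
qed

lemma E_basis: "is_basis Vt E"
proof -
  have finE: "finite E" unfolding E_def using finT by simp
  have indep: "\<not> fm.dependent E"
  proof
    assume "fm.dependent E"
    then obtain u where u: "\<exists>v\<in>E. u v \<noteq> 0" and s: "(\<Sum>v\<in>E. fscale (u v) v) = 0"
      using fm.dependent_finite[OF finE] by blast
    have s2: "(\<Sum>q\<in>T \<times> I. fscale (u (e (fst q) (snd q))) (e (fst q) (snd q))) = 0"
    proof -
      have "(\<Sum>v\<in>E. fscale (u v) v) = (\<Sum>q\<in>T \<times> I. fscale (u (e (fst q) (snd q))) (e (fst q) (snd q)))"
        unfolding E_def by (rule sum.reindex_cong[OF e_inj]) auto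
      then show ?thesis using s by simp
    qed
    have "u (e z k) = 0" if zk: "z \<in> T" "k \<in> I" for z k
    proof -
      have "0 = (\<Sum>q\<in>T \<times> I. fscale (u (e (fst q) (snd q))) (e (fst q) (snd q))) (k, (z, yz z))"
        using s2 by simp
      also have "\<dots> = (\<Sum>q\<in>T \<times> I. if q = (z, k) then u (e z k) else 0)"
        unfolding sum_fun_app fscale_def
        by (rule sum.cong) (use zk in \<open>auto simp: e_delta split: if_splits\<close>)
      also have "\<dots> = u (e z k)" using zk finT by simp
      finally show ?thesis by simp
    qed
    with u show False unfolding E_def by auto
  qed
  have EV: "E \<subseteq> Vt" unfolding E_def using e_Vt by auto
  have VE: "Vt \<subseteq> fm.span E"
  proof
    fix x assume x: "x \<in> Vt"
    have "(\<Sum>q\<in>T \<times> I. fscale (x (snd q, (fst q, yz (fst q)))) (e (fst q) (snd q))) \<in> fm.span E"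
      by (rule fm.span_sum, rule fm.span_scale, rule fm.span_base) (auto simp: E_def)
    then show "x \<in> fm.span E" using decomp[OF x] by simp
  qed
  have "fm.span E = Vt" by (rule fm.span_subspace[OF EV VE Vt_subspace])
  then show ?thesis using finE indep by (simp add: is_basis_def)
qed

lemma char_eq:
  assumes B: "is_basis Vt B"
  shows "char_wrt B (induced_coaction_comp G lact \<tau>) (h2, x2)
    = (\<Sum>q\<in>T \<times> I. (if fst q \<in> carrier G \<and> h2 \<in> carrier G \<and> yz (fst q) = lact h2 x2 then \<tau> (fst q) h2 x2 else 0)
         * e (fst q) (snd q) (snd q, (fst q \<otimes>\<^bsub>G\<^esub> h2, x2)))"
proof -
  have "(\<Sum>b\<in>B. fm.representation B (induced_coaction_comp G lact \<tau> (h2, x2) b) b)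
    = (\<Sum>q\<in>T \<times> I. (if fst q \<in> carrier G \<and> h2 \<in> carrier G \<and> yz (fst q) = lact h2 x2 then \<tau> (fst q) h2 x2 else 0)
         * e (fst q) (snd q) (snd q, (fst q \<otimes>\<^bsub>G\<^esub> h2, x2)))"
  proof (rule trace_lemma[OF B])
    show "finite (T \<times> I)" using finT by simp
    show "\<forall>q\<in>T \<times> I. e (fst q) (snd q) \<in> Vt" using e_Vt by auto
    show "\<forall>b\<in>B. induced_coaction_comp G lact \<tau> (h2, x2) b =
      (\<Sum>q\<in>T \<times> I. fscale ((if fst q \<in> carrier G \<and> h2 \<in> carrier G \<and> yz (fst q) = lact h2 x2 then \<tau> (fst q) h2 x2 else 0)
         * b (snd q, (fst q \<otimes>\<^bsub>G\<^esub> h2, x2))) (e (fst q) (snd q)))"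
    proof
      fix b assume b: "b \<in> B"
      have bV: "b \<in> Vt" using B b fm.span_base[of b B] by (auto simp: is_basis_def)
      have bv: "b \<in> vecs (I \<times> GF)" using bV induced_iff by auto
      have LV: "induced_coaction_comp G lact \<tau> (h2, x2) b \<in> Vt" by (rule closure[OF bV])
      show "induced_coaction_comp G lact \<tau> (h2, x2) b =
      (\<Sum>q\<in>T \<times> I. fscale ((if fst q \<in> carrier G \<and> h2 \<in> carrier G \<and> yz (fst q) = lact h2 x2 then \<tau> (fst q) h2 x2 else 0)
         * b (snd q, (fst q \<otimes>\<^bsub>G\<^esub> h2, x2))) (e (fst q) (snd q)))"
        by (subst decomp[OF LV]) (auto simp: coact[OF bv] intro!: sum.cong)
    qed
  qed
  then show ?thesis by (simp add: char_wrt_def)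
qed


lemma term_eq:
  assumes z: "z \<in> T" and k: "k \<in> I"
  shows "(if z \<in> carrier G \<and> h2 \<in> carrier G \<and> yz z = lact h2 x2 then \<tau> z h2 x2 else 0) * e z k (k, (z \<otimes>\<^bsub>G\<^esub> h2, x2))
   = (\<Sum>g\<in>S. if (h2, x2) = (inv\<^bsub>G\<^esub> z \<otimes>\<^bsub>G\<^esub> g \<otimes>\<^bsub>G\<^esub> z, lact (inv\<^bsub>G\<^esub> z) f)
       then inverse (\<tau> (inv\<^bsub>G\<^esub> z) g f) * \<tau> (inv\<^bsub>G\<^esub> z \<otimes>\<^bsub>G\<^esub> g \<otimes>\<^bsub>G\<^esub> z) (inv\<^bsub>G\<^esub> z) f * a k k g else 0)"
proof -
  have zG: "z \<in> carrier G" using z TG by auto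
  let ?Q = "\<lambda>g. inverse (\<tau> (inv\<^bsub>G\<^esub> z) g f) * \<tau> (inv\<^bsub>G\<^esub> z \<otimes>\<^bsub>G\<^esub> g \<otimes>\<^bsub>G\<^esub> z) (inv\<^bsub>G\<^esub> z) f * a k k g"
  show ?thesis
  proof (cases "h2 \<in> carrier G")
    case False
    have ne: "(h2, x2) \<noteq> (inv\<^bsub>G\<^esub> z \<otimes>\<^bsub>G\<^esub> g \<otimes>\<^bsub>G\<^esub> z, lact (inv\<^bsub>G\<^esub> z) f)" if "g \<in> S" for g
      using False that S_G zG by auto
    then have "(\<Sum>g\<in>S. if (h2, x2) = (inv\<^bsub>G\<^esub> z \<otimes>\<^bsub>G\<^esub> g \<otimes>\<^bsub>G\<^esub> z, lact (inv\<^bsub>G\<^esub> z) f) then ?Q g else 0) = 0"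
      by (intro sum.neutral ballI if_not_P ne)
    then show ?thesis using False by simp
  next
    case True
    define g0 where "g0 = z \<otimes>\<^bsub>G\<^esub> h2 \<otimes>\<^bsub>G\<^esub> inv\<^bsub>G\<^esub> z"
    have g0G: "g0 \<in> carrier G" using True zG by (simp add: g0_def)
    have iff: "h2 = inv\<^bsub>G\<^esub> z \<otimes>\<^bsub>G\<^esub> g \<otimes>\<^bsub>G\<^esub> z \<longleftrightarrow> g = g0" if "g \<in> carrier G" for g
    proof
      assume "h2 = inv\<^bsub>G\<^esub> z \<otimes>\<^bsub>G\<^esub> g \<otimes>\<^bsub>G\<^esub> z"
      then show "g = g0" using that zG by (simp add: g0_def G.m_assoc; simp add: G.m_assoc[symmetric])
    next
      assume "g = g0"
      then show "h2 = inv\<^bsub>G\<^esub> z \<otimes>\<^bsub>G\<^esub> g \<otimes>\<^bsub>G\<^esub> z" using True zG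
        by (simp add: g0_def G.m_assoc; simp add: G.m_assoc[symmetric])
    qed
    have h2eq: "h2 = inv\<^bsub>G\<^esub> z \<otimes>\<^bsub>G\<^esub> g0 \<otimes>\<^bsub>G\<^esub> z" using iff[OF g0G] by simp
    have "(\<Sum>g\<in>S. if (h2, x2) = (inv\<^bsub>G\<^esub> z \<otimes>\<^bsub>G\<^esub> g \<otimes>\<^bsub>G\<^esub> z, lact (inv\<^bsub>G\<^esub> z) f) then ?Q g else 0)
        = (\<Sum>g\<in>S. if g = g0 then (if x2 = yz z then ?Q g0 else 0) else 0)"
      by (rule sum.cong) (use iff S_G in \<open>auto simp: yz_def\<close>)
    also have "\<dots> = (if g0 \<in> S \<and> x2 = yz z then ?Q g0 else 0)"
    proof -
      have finS: "finite S" using finG S_G finite_subset by blast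
      then show ?thesis by simp
    qed
    finally have R: "(\<Sum>g\<in>S. if (h2, x2) = (inv\<^bsub>G\<^esub> z \<otimes>\<^bsub>G\<^esub> g \<otimes>\<^bsub>G\<^esub> z, lact (inv\<^bsub>G\<^esub> z) f) then ?Q g else 0)
        = (if g0 \<in> S \<and> x2 = yz z then ?Q g0 else 0)" .
    have e0: "e z k (k, (z \<otimes>\<^bsub>G\<^esub> h2, x2)) = (if g0 \<in> S \<and> x2 = yz z then inverse (\<tau> g0 z x2) * a k k g0 else 0)"
      using k zG True by (simp add: e_def g0_def)
    show ?thesis
    proof (cases "g0 \<in> S \<and> x2 = yz z")
      case False
      then show ?thesis by (simp only: R e0 if_not_P[OF False] mult_zero_right if_False)
    next
      case c: True
      hence g0: "g0 \<in> S" and x2: "x2 = yz z" by auto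
      have yF: "yz z \<in> carrier F" using yz_F zG by simp
      have izG: "inv\<^bsub>G\<^esub> z \<in> carrier G" using zG by simp
      have h2iz: "h2 \<otimes>\<^bsub>G\<^esub> inv\<^bsub>G\<^esub> z = inv\<^bsub>G\<^esub> z \<otimes>\<^bsub>G\<^esub> g0"
        using True zG by (simp add: g0_def G.m_assoc)
      have zh2: "z \<otimes>\<^bsub>G\<^esub> h2 = g0 \<otimes>\<^bsub>G\<^esub> z"
        using True zG by (simp add: g0_def G.m_assoc)
      have fix2: "lact h2 (yz z) = yz z"
      proof -
        have "lact h2 (yz z) = lact (h2 \<otimes>\<^bsub>G\<^esub> inv\<^bsub>G\<^esub> z) f"
          using lact_mult[of h2 "inv\<^bsub>G\<^esub> z" f] True izG fF by (simp add: yz_def)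
        also have "\<dots> = lact (inv\<^bsub>G\<^esub> z) (lact g0 f)" using h2iz lact_mult izG g0G fF by simp
        also have "\<dots> = yz z" using g0 by (simp add: stab_def yz_def)
        finally show ?thesis .
      qed
      have g0f: "lact g0 f = f" using g0 by (simp add: stab_def)
      define A where "A = \<tau> z h2 (yz z)"
      define B where "B = \<tau> (g0 \<otimes>\<^bsub>G\<^esub> z) (inv\<^bsub>G\<^esub> z) f"
      define C where "C = \<tau> z (inv\<^bsub>G\<^esub> z \<otimes>\<^bsub>G\<^esub> g0) f"
      define D where "D = \<tau> h2 (inv\<^bsub>G\<^esub> z) f"
      define E' where "E' = \<tau> g0 z (yz z)"
      define Z where "Z = \<tau> z (inv\<^bsub>G\<^esub> z) f"
      define Q where "Q = \<tau> (inv\<^bsub>G\<^esub> z) g0 f"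
      have C1: "A * B = C * D"
        using tau_coc[OF zG True izG fF] zh2 h2iz by (simp add: A_def B_def C_def D_def yz_def)
      have C2: "E' * B = Z"
        using tau_coc[OF g0G zG izG fF] zG g0G fF by (simp add: E'_def B_def Z_def yz_def tau_one_r)
      have C3: "Z = C * Q"
        using tau_coc[OF zG izG g0G fF] zG g0G fF g0f by (simp add: Z_def C_def Q_def tau_one_l)
      have nz: "C \<noteq> 0" "E' \<noteq> 0" "Q \<noteq> 0"
        using tau_nz zG izG g0G fF yF by (auto simp: C_def E'_def Q_def)
      have "A * Z = E' * C * D" using C1 C2 by (metis mult.assoc mult.commute)
      hence "A * Q * C = E' * D * C" using C3 by (simp add: mult_ac)
      hence AQ: "A * Q = E' * D" using nz by simp
      have key: "A * inverse E' = inverse Q * D"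
        using AQ nz by (simp add: field_simps)
      have "(if z \<in> carrier G \<and> h2 \<in> carrier G \<and> yz z = lact h2 x2 then \<tau> z h2 x2 else 0) * e z k (k, (z \<otimes>\<^bsub>G\<^esub> h2, x2))
          = A * (inverse E' * a k k g0)"
        using zG True x2 fix2 e0 c by (simp add: A_def E'_def)
      also have "\<dots> = inverse Q * D * a k k g0" using key by (simp add: mult.assoc[symmetric])
      also have "\<dots> = ?Q g0" using h2eq by (simp add: Q_def D_def)
      finally show ?thesis using R c by simp
    qed
  qed
qed

end


theorem proposition5p2:
  fixes F :: "('f, 'a) monoid_scheme" and G :: "('g, 'b) monoid_scheme"
    and lact :: "'g \<Rightarrow> 'f \<Rightarrow> 'f" and ract :: "'g \<Rightarrow> 'f \<Rightarrow> 'g"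
    and \<sigma> :: "'g \<Rightarrow> 'f \<Rightarrow> 'f \<Rightarrow> 'k::field_char_0" and \<tau> :: "'g \<Rightarrow> 'g \<Rightarrow> 'f \<Rightarrow> 'k"
    and f :: 'f and T :: "'g set" and m :: nat and a :: "nat \<Rightarrow> nat \<Rightarrow> 'g \<Rightarrow> 'k"
  assumes "alg_closed TYPE('k)"
    and "matched_pair F G lact ract"
    and "finite (carrier G)"
    and "cocycle_pair F G lact ract \<sigma> \<tau>"
    and "f \<in> carrier F"
    and "T \<subseteq> carrier G" and "\<one>\<^bsub>G\<^esub> \<in> T"
    and "\<forall>g\<in>carrier G. \<exists>!z. z \<in> T \<and> g \<in> stab G lact f #>\<^bsub>G\<^esub> z"
    and "right_comodule (stab G lact f) (kGf_comult G lact \<tau> f) (kGf_counit G) {1..m}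
           (V_coaction G lact f m a)"
    and "simple_comodule (stab G lact f) {1..m} (V_coaction G lact f m a)"
  shows "(\<exists>B. is_basis (induced F G lact \<tau> f m a) B) \<and>
    (\<forall>B. is_basis (induced F G lact \<tau> f m a) B \<longrightarrow>
      char_wrt B (induced_coaction_comp G lact \<tau>) =
      (\<lambda>c. \<Sum>i\<in>{1..m}. \<Sum>z\<in>T. \<Sum>g\<in>stab G lact f.
         if c = (inv\<^bsub>G\<^esub> z \<otimes>\<^bsub>G\<^esub> g \<otimes>\<^bsub>G\<^esub> z, lact (inv\<^bsub>G\<^esub> z) f)
         then inverse (\<tau> (inv\<^bsub>G\<^esub> z) g f)
              * \<tau> (inv\<^bsub>G\<^esub> z \<otimes>\<^bsub>G\<^esub> g \<otimes>\<^bsub>G\<^esub> z) (inv\<^bsub>G\<^esub> z) f * a i i g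
         else 0))"
proof -
  interpret P: P52 F G lact ract \<sigma> \<tau> f T m a
    by (rule P52.intro) (use assms in auto)
  show ?thesis
  proof
    show "\<exists>B. is_basis (induced F G lact \<tau> f m a) B" using P.E_basis by blast
    show "\<forall>B. is_basis (induced F G lact \<tau> f m a) B \<longrightarrow>
      char_wrt B (induced_coaction_comp G lact \<tau>) =
      (\<lambda>c. \<Sum>i\<in>{1..m}. \<Sum>z\<in>T. \<Sum>g\<in>stab G lact f.
         if c = (inv\<^bsub>G\<^esub> z \<otimes>\<^bsub>G\<^esub> g \<otimes>\<^bsub>G\<^esub> z, lact (inv\<^bsub>G\<^esub> z) f)
         then inverse (\<tau> (inv\<^bsub>G\<^esub> z) g f)
              * \<tau> (inv\<^bsub>G\<^esub> z \<otimes>\<^bsub>G\<^esub> g \<otimes>\<^bsub>G\<^esub> z) (inv\<^bsub>G\<^esub> z) f * a i i g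
         else 0)"
    proof (intro allI impI ext)
      fix B and c :: "'g \<times> 'f" assume B: "is_basis (induced F G lact \<tau> f m a) B"
      obtain h2 x2 where c: "c = (h2, x2)" by (cases c)
      let ?Q = "\<lambda>z k. (\<Sum>g\<in>stab G lact f. if (h2, x2) = (inv\<^bsub>G\<^esub> z \<otimes>\<^bsub>G\<^esub> g \<otimes>\<^bsub>G\<^esub> z, lact (inv\<^bsub>G\<^esub> z) f)
         then inverse (\<tau> (inv\<^bsub>G\<^esub> z) g f)
              * \<tau> (inv\<^bsub>G\<^esub> z \<otimes>\<^bsub>G\<^esub> g \<otimes>\<^bsub>G\<^esub> z) (inv\<^bsub>G\<^esub> z) f * a k k g else 0)"
      have "char_wrt B (induced_coaction_comp G lact \<tau>) c
          = (\<Sum>q\<in>T \<times> {1..m}. (if fst q \<in> carrier G \<and> h2 \<in> carrier G \<and> P.yz (fst q) = lact h2 x2 then \<tau> (fst q) h2 x2 else 0)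
         * P.e (fst q) (snd q) (snd q, (fst q \<otimes>\<^bsub>G\<^esub> h2, x2)))"
        using P.char_eq[OF B] c by simp
      also have "\<dots> = (\<Sum>q\<in>T \<times> {1..m}. ?Q (fst q) (snd q))"
        by (rule sum.cong[OF refl], rule P.term_eq) auto
      also have "\<dots> = (\<Sum>z\<in>T. \<Sum>k\<in>{1..m}. ?Q z k)"
        using sum.cartesian_product[of "\<lambda>z k. ?Q z k" "{1..m}" T] by (simp only: split_def)
      also have "\<dots> = (\<Sum>k\<in>{1..m}. \<Sum>z\<in>T. ?Q z k)"
        by (rule sum.swap)
      finally show "char_wrt B (induced_coaction_comp G lact \<tau>) c =
        (\<Sum>i\<in>{1..m}. \<Sum>z\<in>T. \<Sum>g\<in>stab G lact f.
         if c = (inv\<^bsub>G\<^esub> z \<otimes>\<^bsub>G\<^esub> g \<otimes>\<^bsub>G\<^esub> z, lact (inv\<^bsub>G\<^esub> z) f)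
         then inverse (\<tau> (inv\<^bsub>G\<^esub> z) g f)
              * \<tau> (inv\<^bsub>G\<^esub> z \<otimes>\<^bsub>G\<^esub> g \<otimes>\<^bsub>G\<^esub> z) (inv\<^bsub>G\<^esub> z) f * a i i g
         else 0)" using c by simp
    qed
  qed
qed

end
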